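(* Let $G$ be a connected finite simple graph on $[n]$ and let $S:=\{\ker x_1,\dots,\ker x_n,\ker(x_1+\dots+x_n)\}\subseteq\mathcal{A}_G$. Then $\langle S\rangle_{\mathcal{A}_G}=\mathcal{A}_G$. In particular, $\mathcal{A}_G$ is projectively unique over $\mathbb{Q}$.
   Context: Let $G=(N,E)$ be a finite simple graph with vertex set $N=[n]=\{1,\dots,n\}$. For $\varnothing\neq I\subseteq N$, $G[I]$ denotes the induced subgraph on $I$, and $H_I:=\ker\big(\sum_{i\in I}x_i\big)$, where $x_1,\dots,x_n$ are the coordinate functions on $\mathbb{Q}^n$. The connected subgraph arrangement is $\mathcal{A}_G:=\{H_I\mid \varnothing\neq I\subseteq N,\ G[I]\text{ connected}\}$. $L(\mathcal{A})$ is the set of intersections of subsets of $\mathcal{A}$, ordered by reverse inclusion. For $\varnothing\neq S\subseteq\mathcal{A}$: $\mathrm{Gen}_0(\mathcal{A},S):=S$, $\mathrm{Gen}_{i+1}(\mathcal{A},S):=\{H\in\mathcal{A}\mid \exists\, J\subseteq L(\mathrm{Gen}_i(\mathcal{A},S)),\ H=\sum_{X\in J}X\}$, and $\langle S\rangle_{\mathcal{A}}:=\bigcup_{i\ge0}\mathrm{Gen}_i(\mathcal{A},S)$. Projectively unique means: every arrangement $\mathcal{C}$ in $\mathbb{Q}^n$ with $L(\mathcal{C})\cong L(\mathcal{A}_G)$ as posets equals $\varphi(\mathcal{A}_G)$ for some $\varphi\in\mathrm{GL}(\mathbb{Q}^n)$. *)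

theory Defs
  imports Complex_Main
begin

text \<open>The vertex set [n] is modelled by a finite type 'n (n = CARD('n));
  Q^n is the type 'n \<Rightarrow> rat (coordinate x_i of v is v i).\<close>

definition simple_graph :: "('n \<Rightarrow> 'n \<Rightarrow> bool) \<Rightarrow> bool" where
  "simple_graph E \<longleftrightarrow> (\<forall>u v. E u v \<longrightarrow> E v u) \<and> (\<forall>u. \<not> E u u)"

definition connected_on :: "('n \<Rightarrow> 'n \<Rightarrow> bool) \<Rightarrow> 'n set \<Rightarrow> bool" where
  "connected_on E I \<longleftrightarrow> I \<noteq> {} \<and>
     (\<forall>u\<in>I. \<forall>v\<in>I. (\<lambda>a b. a \<in> I \<and> b \<in> I \<and> E a b)\<^sup>*\<^sup>* u v)"

definition hypI :: "'n set \<Rightarrow> ('n \<Rightarrow> rat) set" where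
  "hypI I = {x. (\<Sum>i\<in>I. x i) = 0}"

definition subgraph_arr :: "('n::finite \<Rightarrow> 'n \<Rightarrow> bool) \<Rightarrow> ('n \<Rightarrow> rat) set set" where
  "subgraph_arr E = {hypI I | I. I \<noteq> {} \<and> connected_on E I}"

text \<open>Intersection lattice: all intersections of subsets (empty intersection = ambient space).\<close>
definition lat :: "('n \<Rightarrow> rat) set set \<Rightarrow> ('n \<Rightarrow> rat) set set" where
  "lat A = {\<Inter> B | B. B \<subseteq> A}"

definition lat_le :: "('n \<Rightarrow> rat) set \<Rightarrow> ('n \<Rightarrow> rat) set \<Rightarrow> bool" where
  "lat_le X Y \<longleftrightarrow> Y \<subseteq> X"

definition qspan :: "('n \<Rightarrow> rat) set \<Rightarrow> ('n \<Rightarrow> rat) set" where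
  "qspan S = {x. \<exists>F c. finite F \<and> F \<subseteq> S \<and> x = (\<lambda>i. \<Sum>v\<in>F. c v * v i)}"

definition subspace_sum :: "('n \<Rightarrow> rat) set set \<Rightarrow> ('n \<Rightarrow> rat) set" where
  "subspace_sum J = qspan (\<Union> J)"

fun Gen :: "('n \<Rightarrow> rat) set set \<Rightarrow> ('n \<Rightarrow> rat) set set \<Rightarrow> nat \<Rightarrow> ('n \<Rightarrow> rat) set set" where
  "Gen A S 0 = S"
| "Gen A S (Suc i) = {H \<in> A. \<exists>J \<subseteq> lat (Gen A S i). H = subspace_sum J}"

definition generated :: "('n \<Rightarrow> rat) set set \<Rightarrow> ('n \<Rightarrow> rat) set set \<Rightarrow> ('n \<Rightarrow> rat) set set" where
  "generated A S = (\<Union>i. Gen A S i)"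

definition qhyperplane :: "('n::finite \<Rightarrow> rat) set \<Rightarrow> bool" where
  "qhyperplane H \<longleftrightarrow> (\<exists>a. a \<noteq> (\<lambda>_. 0) \<and> H = {x. (\<Sum>i\<in>UNIV. a i * x i) = 0})"

definition arrangement :: "('n::finite \<Rightarrow> rat) set set \<Rightarrow> bool" where
  "arrangement C \<longleftrightarrow> finite C \<and> (\<forall>H\<in>C. qhyperplane H)"

definition qlinear :: "(('n \<Rightarrow> rat) \<Rightarrow> ('n \<Rightarrow> rat)) \<Rightarrow> bool" where
  "qlinear f \<longleftrightarrow> (\<forall>x y. f (\<lambda>i. x i + y i) = (\<lambda>i. f x i + f y i)) \<and>
                  (\<forall>c x. f (\<lambda>i. c * x i) = (\<lambda>i. c * f x i))"

definition lat_iso :: "('n \<Rightarrow> rat) set set \<Rightarrow> ('n \<Rightarrow> rat) set set \<Rightarrow> bool" where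
  "lat_iso C A \<longleftrightarrow> (\<exists>g. bij_betw g (lat C) (lat A) \<and>
      (\<forall>X\<in>lat C. \<forall>Y\<in>lat C. lat_le X Y \<longleftrightarrow> lat_le (g X) (g Y)))"

definition proj_unique :: "('n::finite \<Rightarrow> rat) set set \<Rightarrow> bool" where
  "proj_unique A \<longleftrightarrow> (\<forall>C. arrangement C \<and> lat_iso C A \<longrightarrow>
      (\<exists>\<phi>. qlinear \<phi> \<and> bij \<phi> \<and> C = (\<lambda>H. \<phi> ` H) ` A))"

end

theory Submission
  imports Defs "HOL-Library.Function_Algebras"
begin


definition sc :: "rat \<Rightarrow> ('n \<Rightarrow> rat) \<Rightarrow> ('n \<Rightarrow> rat)" where "sc c x = (\<lambda>i. c * x i)"
definition ee :: "'n \<Rightarrow> 'n \<Rightarrow> rat" where "ee j = (\<lambda>i. if i = j then 1 else 0)"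
definition dot :: "('n::finite \<Rightarrow> rat) \<Rightarrow> ('n \<Rightarrow> rat) \<Rightarrow> rat" where "dot a x = (\<Sum>i\<in>UNIV. a i * x i)"

lemma sum_fun_apply: "(\<Sum>a\<in>A. f a) i = (\<Sum>a\<in>A. f a i)"
  by (induction A rule: infinite_finite_induct) auto

interpretation vs: vector_space "sc :: rat \<Rightarrow> ('n \<Rightarrow> rat) \<Rightarrow> _"
  by unfold_locales (auto simp: sc_def fun_eq_iff algebra_simps)

lemma span_coord0:
  assumes "v \<in> vs.span (range ee - {ee m})" shows "v m = 0"
proof -
  have "vs.subspace (Collect (\<lambda>v. v m = 0))"
    by (auto simp: vs.subspace_def sc_def)
  then show ?thesis using assms
    by (rule_tac vs.span_induct[where P="\<lambda>v. v m = 0"]) (auto simp: ee_def split: if_splits)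
qed

lemma ee_inj: "ee a = ee b \<Longrightarrow> a = b"
  by (auto simp: ee_def fun_eq_iff split: if_splits)

interpretation fv: finite_dimensional_vector_space "sc :: rat \<Rightarrow> ('n::finite \<Rightarrow> rat) \<Rightarrow> _" "range ee"
proof unfold_locales
  show "finite (range (ee :: 'n \<Rightarrow> _))" by simp
  show "vs.independent (range (ee::'n \<Rightarrow> _))"
    unfolding vs.dependent_def
  proof
    assume "\<exists>a\<in>range (ee::'n \<Rightarrow> _). a \<in> vs.span (range ee - {a})"
    then obtain m::'n where "ee m \<in> vs.span (range ee - {ee m})" by auto
    from span_coord0[OF this] show False by (simp add: ee_def)
  qed
  show "vs.span (range (ee::'n \<Rightarrow> _)) = UNIV"
  proof (rule set_eqI, simp)
    fix x :: "'n \<Rightarrow> rat"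
    have "x = (\<Sum>j\<in>UNIV. sc (x j) (ee j))"
      by (simp add: fun_eq_iff sum_fun_apply sc_def ee_def if_distrib cong: if_cong)
    also have "\<dots> \<in> vs.span (range ee)"
      by (intro vs.span_sum vs.span_scale vs.span_base) auto
    finally show "x \<in> vs.span (range ee)" .
  qed
qed

lemma surj_imp_inj:
  fixes f :: "('n::finite \<Rightarrow> rat) \<Rightarrow> ('n \<Rightarrow> rat)"
  assumes "\<And>x y. f (x + y) = f x + f y" "\<And>c x. f (sc c x) = sc c (f x)" "surj f"
  shows "inj f"
  apply (rule fv.linear_surj_imp_inj)
  using assms by (auto simp: Vector_Spaces.linear_iff vs.vector_space_axioms)




lemma qspan_eq: "(\<lambda>i. \<Sum>v\<in>F. c v * v i) = (\<Sum>v\<in>F. sc (c v) v)"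
  by (simp add: fun_eq_iff sum_fun_apply sc_def)

lemma dot_add: "dot a (x + y) = dot a x + dot a y"
  by (simp add: dot_def sum.distrib distrib_left)
lemma dot_sc: "dot a (sc c x) = c * dot a x"
  by (simp add: dot_def sc_def sum_distrib_left algebra_simps)
lemma dot_ee: "dot a (ee j) = a j"
proof -
  have "(\<Sum>i\<in>UNIV. a i * ee j i) = (\<Sum>i\<in>UNIV. (if i = j then a j else 0))"
    by (rule sum.cong) (auto simp: ee_def)
  then show ?thesis by (simp add: dot_def)
qed
lemma dot_sum: "dot a (\<Sum>v\<in>F. g v) = (\<Sum>v\<in>F. dot a (g v))"
  by (simp add: dot_def sum_fun_apply sum_distrib_left sum.swap[of _ F])

lemma hyp_subspace: "vs.subspace {x. dot a x = 0}"
  by (auto simp: vs.subspace_def dot_add dot_sc) (simp add: dot_def)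

lemma qh_iff: "qhyperplane H \<longleftrightarrow> (\<exists>a. a \<noteq> 0 \<and> H = {x. dot a x = 0})"
  by (simp add: qhyperplane_def dot_def zero_fun_def)

lemma hyp_ne: "(a::'n::finite\<Rightarrow>rat) \<noteq> 0 \<Longrightarrow> {x. dot a x = 0} \<noteq> UNIV"
proof
  assume "a \<noteq> 0" "{x. dot a x = 0} = UNIV"
  then obtain j where "a j \<noteq> 0" by (auto simp: fun_eq_iff)
  moreover have "dot a (ee j) = 0" using \<open>_ = UNIV\<close> by auto
  ultimately show False by (simp add: dot_ee)
qed

lemma hyp_max:
  fixes a :: "'n::finite \<Rightarrow> rat"
  assumes "{x. dot a x = 0} \<subseteq> V" "vs.subspace V"
  shows "V = {x. dot a x = 0} \<or> V = UNIV"
proof (cases "V = {x. dot a x = 0}")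
  case True then show ?thesis by simp
next
  case False
  then obtain y where y: "y \<in> V" "dot a y \<noteq> 0" using assms(1) by auto
  have "x \<in> V" for x
  proof -
    define t where "t = dot a x / dot a y"
    have "x + sc (- t) y \<in> {x. dot a x = 0}"
      unfolding mem_Collect_eq dot_add dot_sc t_def using y by simp
    then have "x + sc (- t) y \<in> V" using assms(1) by blast
    moreover have "sc t y \<in> V" by (rule vs.subspace_scale[OF assms(2) y(1)])
    ultimately have "(x + sc (- t) y) + sc t y \<in> V"
      by (rule vs.subspace_add[OF assms(2)])
    moreover have "(x + sc (- t) y) + sc t y = x" by (simp add: fun_eq_iff sc_def)
    ultimately show "x \<in> V" by simp
  qed
  then show ?thesis by auto
qed

lemma qh_subspace: "qhyperplane H \<Longrightarrow> vs.subspace H"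
  using hyp_subspace by (auto simp: qh_iff)

lemma qh_ne: "qhyperplane (H::('n::finite \<Rightarrow> rat) set) \<Longrightarrow> H \<noteq> UNIV"
  using hyp_ne by (auto simp: qh_iff)

lemma qh_max: "qhyperplane H \<Longrightarrow> H \<subseteq> V \<Longrightarrow> vs.subspace V \<Longrightarrow> V = H \<or> V = UNIV"
  using hyp_max by (auto simp: qh_iff)

lemma lat_subspace: "\<forall>H\<in>L. qhyperplane H \<Longrightarrow> X \<in> lat L \<Longrightarrow> vs.subspace X"
  unfolding lat_def using qh_subspace by (auto intro!: vs.subspace_Inter)

lemma in_lat: "H \<in> L \<Longrightarrow> H \<in> lat L"
  unfolding lat_def by (rule CollectI, rule exI[of _ "{H}"]) auto

lemma lat_mono: "X \<in> lat L1 \<Longrightarrow> L1 \<subseteq> L2 \<Longrightarrow> X \<in> lat L2"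
  unfolding lat_def by auto

lemma UNIV_lat: "UNIV \<in> lat L"
  unfolding lat_def by (rule CollectI, rule exI[of _ "{}"]) auto

definition atom :: "('n \<Rightarrow> rat) set set \<Rightarrow> ('n \<Rightarrow> rat) set \<Rightarrow> bool" where
  "atom L X \<longleftrightarrow> X \<in> lat L \<and> X \<noteq> UNIV \<and> (\<forall>Y\<in>lat L. X \<subseteq> Y \<longrightarrow> Y = X \<or> Y = UNIV)"

lemma atomI: "X \<in> lat L \<Longrightarrow> X \<noteq> UNIV \<Longrightarrow> (\<And>Y. Y \<in> lat L \<Longrightarrow> X \<subseteq> Y \<Longrightarrow> Y = X \<or> Y = UNIV) \<Longrightarrow> atom L X"
  unfolding atom_def by blast
lemma atomD: "atom L X \<Longrightarrow> X \<in> lat L" "atom L X \<Longrightarrow> X \<noteq> UNIV"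
  "atom L X \<Longrightarrow> Y \<in> lat L \<Longrightarrow> X \<subseteq> Y \<Longrightarrow> Y = X \<or> Y = UNIV"
  unfolding atom_def by blast+

lemma atom_iff:
  fixes L :: "('n::finite \<Rightarrow> rat) set set"
  assumes "\<forall>H\<in>L. qhyperplane H"
  shows "atom L X \<longleftrightarrow> X \<in> L"
proof
  assume XL: "X \<in> L"
  then have qX: "qhyperplane X" using assms by auto
  show "atom L X" unfolding atom_def
  proof (intro conjI ballI impI)
    show "X \<in> lat L" using XL by (rule in_lat)
    show "X \<noteq> UNIV" using qX by (rule qh_ne)
    fix Y assume "Y \<in> lat L" "X \<subseteq> Y"
    then show "Y = X \<or> Y = UNIV" using qh_max[OF qX] lat_subspace[OF assms] by blast
  qed
next
  assume a: "atom L X"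
  then obtain B where B: "B \<subseteq> L" "X = \<Inter>B" unfolding atom_def lat_def by auto
  with a have "B \<noteq> {}" unfolding atom_def by auto
  then obtain H where "H \<in> B" by auto
  then have HL: "H \<in> L" using B by auto
  have "X \<subseteq> H" using \<open>H \<in> B\<close> B by auto
  moreover have "H \<in> lat L" using HL in_lat by auto
  moreover have "H \<noteq> UNIV" using HL assms qh_ne by auto
  ultimately have "H = X" using a unfolding atom_def by auto
  then show "X \<in> L" using \<open>H \<in> B\<close> B by auto
qed

lemma iso_props:
  fixes L1 L2 :: "('n::finite \<Rightarrow> rat) set set"
  assumes h1: "\<forall>H\<in>L1. qhyperplane H" and h2: "\<forall>H\<in>L2. qhyperplane H"
    and bij: "bij_betw f (lat L1) (lat L2)"
    and mono: "\<forall>X\<in>lat L1. \<forall>Y\<in>lat L1. X \<subseteq> Y \<longleftrightarrow> f X \<subseteq> f Y"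
  shows "f UNIV = UNIV" "f ` L1 = L2" "\<And>B. B \<subseteq> L1 \<Longrightarrow> f (\<Inter>B) = \<Inter>(f ` B)"
proof -
  have im: "f ` lat L1 = lat L2" using bij by (simp add: bij_betw_def)
  have surj: "\<And>Z. Z \<in> lat L2 \<Longrightarrow> \<exists>W\<in>lat L1. Z = f W"
    using im by (metis imageE)
  have mD: "\<And>X Y. X \<in> lat L1 \<Longrightarrow> Y \<in> lat L1 \<Longrightarrow> X \<subseteq> Y \<Longrightarrow> f X \<subseteq> f Y"
    using mono by blast
  have mR: "\<And>X Y. X \<in> lat L1 \<Longrightarrow> Y \<in> lat L1 \<Longrightarrow> f X \<subseteq> f Y \<Longrightarrow> X \<subseteq> Y"
    using mono by blast
  have io: "inj_on f (lat L1)" using bij by (simp add: bij_betw_def)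
  have inj: "\<And>X Y. X \<in> lat L1 \<Longrightarrow> Y \<in> lat L1 \<Longrightarrow> f X = f Y \<Longrightarrow> X = Y"
    using io by (rule inj_onD)
  show fUU: "f UNIV = UNIV"
  proof -
    obtain W where "W \<in> lat L1" "UNIV = f W" using surj[OF UNIV_lat] by auto
    then have "f W \<subseteq> f UNIV" using mD[OF _ UNIV_lat] by blast
    then show ?thesis using \<open>UNIV = f W\<close> by auto
  qed
  have fl: "\<And>X. X \<in> lat L1 \<Longrightarrow> f X \<in> lat L2" using im by blast
  have atomf: "atom L2 (f X)" if aX: "atom L1 X" for X
  proof (rule atomI)
    have X: "X \<in> lat L1" "X \<noteq> UNIV" using atomD[OF aX] by auto
    show "f X \<in> lat L2" by (rule fl[OF X(1)])
    show "f X \<noteq> UNIV" using inj[OF X(1) UNIV_lat] fUU X(2) by auto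
    fix Y assume Y: "Y \<in> lat L2" "f X \<subseteq> Y"
    obtain W where W: "W \<in> lat L1" "Y = f W" using surj[OF Y(1)] by auto
    have "X \<subseteq> W" using mR[OF X(1) W(1)] Y(2) W(2) by simp
    then have "W = X \<or> W = UNIV" using atomD(3)[OF aX W(1)] by simp
    then show "Y = f X \<or> Y = UNIV" using W(2) fUU by auto
  qed
  have atomb: "atom L1 X" if X: "X \<in> lat L1" and aX: "atom L2 (f X)" for X
  proof (rule atomI)
    show "X \<in> lat L1" by (rule X)
    show "X \<noteq> UNIV" using atomD(2)[OF aX] fUU by auto
    fix Y assume Y: "Y \<in> lat L1" "X \<subseteq> Y"
    have "f X \<subseteq> f Y" by (rule mD[OF X Y])
    then have "f Y = f X \<or> f Y = UNIV" using atomD(3)[OF aX fl[OF Y(1)]] by simp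
    then show "Y = X \<or> Y = UNIV"
    proof
      assume "f Y = f X" then show ?thesis using inj[OF Y(1) X] by simp
    next
      assume "f Y = UNIV" then have "f Y = f UNIV" using fUU by simp
      then show ?thesis using inj[OF Y(1) UNIV_lat] by simp
    qed
  qed
  show "f ` L1 = L2"
  proof
    show "f ` L1 \<subseteq> L2" using atomf atom_iff[OF h1] atom_iff[OF h2] by auto
    show "L2 \<subseteq> f ` L1"
    proof
      fix Z assume "Z \<in> L2"
      then obtain W where W: "W \<in> lat L1" "Z = f W" using surj in_lat by metis
      then have "atom L1 W" using atomb \<open>Z \<in> L2\<close> atom_iff[OF h2] by auto
      then show "Z \<in> f ` L1" using W atom_iff[OF h1] by auto
    qed
  qed
  then have fL: "f H \<in> L2" if "H \<in> L1" for H using that by auto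
  show "f (\<Inter>B) = \<Inter>(f ` B)" if B: "B \<subseteq> L1" for B
  proof
    have IB: "\<Inter>B \<in> lat L1" using B unfolding lat_def by auto
    show "f (\<Inter>B) \<subseteq> \<Inter>(f ` B)"
    proof (rule Inter_greatest)
      fix Z assume "Z \<in> f ` B"
      then obtain H where "H \<in> B" "Z = f H" by auto
      then have "H \<in> lat L1" using B in_lat by auto
      moreover have "\<Inter>B \<subseteq> H" using \<open>H \<in> B\<close> by auto
      ultimately show "f (\<Inter>B) \<subseteq> Z" using mD[OF IB] \<open>Z = f H\<close> by blast
    qed
    have "f ` B \<subseteq> L2" using B fL by auto
    then have "\<Inter>(f ` B) \<in> lat L2" unfolding lat_def by blast
    then obtain W where W: "W \<in> lat L1" "\<Inter>(f ` B) = f W" using surj by metis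
    have "W \<subseteq> H" if "H \<in> B" for H
    proof -
      have "f W \<subseteq> f H" using W that by auto
      moreover have "H \<in> lat L1" using B in_lat that by auto
      ultimately show ?thesis using mR W by blast
    qed
    then have "W \<subseteq> \<Inter>B" by auto
    then show "\<Inter>(f ` B) \<subseteq> f (\<Inter>B)" using mD[OF W(1) IB] W by auto
  qed
qed




lemma hypI_dot: "hypI I = {x. dot (\<lambda>i. if i \<in> I then 1 else 0) x = 0}"
proof -
  have "dot (\<lambda>i. if i \<in> I then 1 else 0) x = (\<Sum>i\<in>I. x i)" for x :: "'a \<Rightarrow> rat"
  proof -
    have "dot (\<lambda>i. if i \<in> I then 1 else 0) x = (\<Sum>i\<in>UNIV. if i \<in> I then x i else 0)"
      unfolding dot_def by (rule sum.cong) auto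
    also have "\<dots> = (\<Sum>i\<in>I. x i)" by (simp add: sum.If_cases)
    finally show ?thesis .
  qed
  then show ?thesis by (simp add: hypI_def)
qed

lemma hypI_qh: "I \<noteq> {} \<Longrightarrow> qhyperplane (hypI (I::'n::finite set))"
  unfolding qh_iff hypI_dot
  by (rule exI[of _ "\<lambda>i. if i \<in> I then 1 else 0"]) (auto simp: fun_eq_iff)

lemma hypI_single: "hypI {k} = {x. x k = 0}"
  by (simp add: hypI_def)

lemma qspan_sub: "vs.subspace V \<Longrightarrow> T \<subseteq> V \<Longrightarrow> qspan T \<subseteq> V"
  unfolding qspan_def qspan_eq
  by (auto intro!: vs.subspace_sum vs.subspace_scale)

lemma sub_qspan: "T \<subseteq> qspan T"
proof
  fix x assume "x \<in> T"
  then show "x \<in> qspan T" unfolding qspan_def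
    by (intro CollectI exI[of _ "{x}"] exI[of _ "\<lambda>_. 1"]) auto
qed

lemma qspan_comb: "x \<in> qspan T \<Longrightarrow> \<exists>F c. finite F \<and> F \<subseteq> T \<and> x = (\<Sum>v\<in>F. sc (c v) v)"
  unfolding qspan_def qspan_eq by blast

lemma gen1:
  fixes I :: "'n::finite set"
  assumes "I \<noteq> {}"
  shows "hypI I = subspace_sum {\<Inter>{hypI {k} |k. k \<in> I}, \<Inter>({hypI {k} |k. k \<notin> I} \<union> {hypI UNIV})}"
proof -
  define X1 where "X1 = \<Inter>{hypI {k} |k. k \<in> I}"
  define X2 where "X2 = \<Inter>({hypI {k} |k. k \<notin> I} \<union> {hypI UNIV})"
  have m1: "x \<in> X1 \<longleftrightarrow> (\<forall>k\<in>I. x k = 0)" for x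
    unfolding X1_def hypI_single by blast
  have m2: "x \<in> X2 \<longleftrightarrow> (\<forall>k. k \<notin> I \<longrightarrow> x k = 0) \<and> (\<Sum>i\<in>UNIV. x i) = 0" for x
    unfolding X2_def hypI_single by (auto simp: hypI_def)
  have sub: "vs.subspace (hypI I)" unfolding hypI_dot by (rule hyp_subspace)
  have "X1 \<union> X2 \<subseteq> hypI I"
  proof
    fix x assume "x \<in> X1 \<union> X2"
    then show "x \<in> hypI I"
    proof
      assume "x \<in> X1" then show ?thesis using m1 by (simp add: hypI_def)
    next
      assume "x \<in> X2"
      then have z: "\<forall>k. k \<notin> I \<longrightarrow> x k = 0" "(\<Sum>i\<in>UNIV. x i) = 0" using m2 by auto
      have "(\<Sum>i\<in>I. x i) = (\<Sum>i\<in>UNIV. x i)"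
        by (rule sum.mono_neutral_left) (use z in auto)
      with z have "(\<Sum>i\<in>I. x i) = 0" by simp
      then show ?thesis by (simp add: hypI_def)
    qed
  qed
  then have le: "qspan (X1 \<union> X2) \<subseteq> hypI I" by (rule qspan_sub[OF sub])
  have ge: "hypI I \<subseteq> qspan (X1 \<union> X2)"
  proof
    fix x assume x: "x \<in> hypI I"
    define u where "u = (\<lambda>k. if k \<in> I then 0 else x k)"
    define v where "v = (\<lambda>k. if k \<in> I then x k else 0)"
    have u: "u \<in> X1" using m1 by (simp add: u_def)
    have "(\<Sum>i\<in>UNIV. v i) = (\<Sum>i\<in>I. x i)" unfolding v_def by (simp add: sum.If_cases)
    then have v: "v \<in> X2" using m2 x by (simp add: v_def hypI_def)
    have "x = (\<lambda>i. \<Sum>w\<in>{u,v}. 1 * w i)"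
    proof (cases "u = v")
      case True
      then have "u = 0" "x = 0" by (auto simp: u_def v_def fun_eq_iff split: if_splits; metis)+
      then show ?thesis using True by (simp add: fun_eq_iff)
    next
      case False then show ?thesis by (simp add: fun_eq_iff u_def v_def)
    qed
    then show "x \<in> qspan (X1 \<union> X2)" unfolding qspan_def using u v
      by (intro CollectI exI[of _ "{u,v}"] exI[of _ "\<lambda>_. 1"]) auto
  qed
  show ?thesis using le ge unfolding subspace_sum_def X1_def[symmetric] X2_def[symmetric] by auto
qed

lemma bij_image_Inter:
  assumes "bij (\<phi> :: 'a \<Rightarrow> 'b)" shows "\<phi> ` \<Inter>B = \<Inter>((\<lambda>H. \<phi> ` H) ` B)"
proof
  show "\<phi> ` \<Inter>B \<subseteq> \<Inter>((\<lambda>H. \<phi> ` H) ` B)" by auto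
  show "\<Inter>((\<lambda>H. \<phi> ` H) ` B) \<subseteq> \<phi> ` \<Inter>B"
  proof
    fix z assume z: "z \<in> \<Inter>((\<lambda>H. \<phi> ` H) ` B)"
    obtain t where t: "z = \<phi> t" using assms by (metis bij_def surj_def)
    have "t \<in> H" if "H \<in> B" for H
      using z that t assms by (auto simp: bij_def inj_image_mem_iff)
    then show "z \<in> \<phi> ` \<Inter>B" using t by auto
  qed
qed

lemma imgI: "bij \<phi> \<Longrightarrow> (\<And>t. \<phi> t \<in> K \<longleftrightarrow> t \<in> H) \<Longrightarrow> \<phi> ` H = K"
  by (auto simp: bij_def surj_def) (metis image_eqI)

lemma iso_flip:
  assumes "lat_iso C A"
  shows "\<exists>f. bij_betw f (lat A) (lat C) \<and> (\<forall>X\<in>lat A. \<forall>Y\<in>lat A. X \<subseteq> Y \<longleftrightarrow> f X \<subseteq> f Y)"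
proof -
  obtain g where g: "bij_betw g (lat C) (lat A)"
    and m: "\<forall>X\<in>lat C. \<forall>Y\<in>lat C. Y \<subseteq> X \<longleftrightarrow> g Y \<subseteq> g X"
    using assms unfolding lat_iso_def lat_le_def by blast
  define f where "f = inv_into (lat C) g"
  have b: "bij_betw f (lat A) (lat C)" unfolding f_def by (rule bij_betw_inv_into[OF g])
  have "X \<subseteq> Y \<longleftrightarrow> f X \<subseteq> f Y" if "X \<in> lat A" "Y \<in> lat A" for X Y
  proof -
    have im: "g ` lat C = lat A" using g by (simp add: bij_betw_def)
    have "g (f X) = X" "g (f Y) = Y" unfolding f_def using that im by (simp_all add: f_inv_into_f)
    moreover have "f X \<in> lat C" "f Y \<in> lat C" using b that bij_betwE by blast+
    ultimately show ?thesis using m by metis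
  qed
  then show ?thesis using b by blast
qed




lemma delta_sum: "(\<Sum>m\<in>(UNIV::'n::finite set). c m * (if k = m then 1 else 0)) = (c k :: rat)"
proof -
  have "(\<Sum>m\<in>(UNIV::'n set). c m * (if k = m then 1 else 0)) = (\<Sum>m\<in>UNIV. if k = m then c m else 0)"
    by (rule sum.cong) auto
  then show ?thesis by simp
qed

theorem mainTheorem4:
  fixes E :: "'n::finite \<Rightarrow> 'n \<Rightarrow> bool"
  assumes "simple_graph E"
    and "connected_on E UNIV"
  defines "S \<equiv> {hypI {i} | i. True} \<union> {hypI UNIV}"
  shows "generated (subgraph_arr E) S = subgraph_arr E \<and> proj_unique (subgraph_arr E)"
proof -
  define A where "A = subgraph_arr E"
  have conn1: "connected_on E {i}" for i by (auto simp: connected_on_def)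
  have single: "hypI {k} \<in> A" for k unfolding A_def subgraph_arr_def using conn1 by blast
  have univA: "hypI UNIV \<in> A" unfolding A_def subgraph_arr_def using assms(2) by blast
  have SA: "S \<subseteq> A" using single univA by (auto simp: S_def)
  have GenA: "Gen A S i \<subseteq> A" for i by (cases i) (use SA in auto)
  have hA: "\<forall>H\<in>A. qhyperplane H" unfolding A_def subgraph_arr_def using hypI_qh by blast
  have gen: "generated A S = A"
  proof
    show "generated A S \<subseteq> A" unfolding generated_def using GenA by blast
    show "A \<subseteq> generated A S"
    proof
      fix H assume "H \<in> A"
      then obtain I where I: "I \<noteq> {}" "H = hypI I" unfolding A_def subgraph_arr_def by blast
      let ?X1 = "\<Inter>{hypI {k} |k. k \<in> I}"
      let ?X2 = "\<Inter>({hypI {k} |k. k \<notin> I} \<union> {hypI UNIV})"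
      have "?X1 \<in> lat S" unfolding lat_def S_def by blast
      moreover have "?X2 \<in> lat S" unfolding lat_def S_def by blast
      ultimately have "{?X1, ?X2} \<subseteq> lat (Gen A S 0)" by simp
      moreover have "H = subspace_sum {?X1, ?X2}" using gen1[OF I(1)] I(2) by simp
      ultimately have "H \<in> Gen A S (Suc 0)" using \<open>H \<in> A\<close>
        unfolding Gen.simps by blast
      then show "H \<in> generated A S" unfolding generated_def by blast
    qed
  qed
  have pu: "proj_unique A" unfolding proj_unique_def
  proof (intro allI impI)
    fix C :: "('n \<Rightarrow> rat) set set"
    assume "arrangement C \<and> lat_iso C A"
    then have hC: "\<forall>H\<in>C. qhyperplane H" and iso: "lat_iso C A" by (auto simp: arrangement_def)
    obtain f where bij: "bij_betw f (lat A) (lat C)"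
      and mono: "\<forall>X\<in>lat A. \<forall>Y\<in>lat A. X \<subseteq> Y \<longleftrightarrow> f X \<subseteq> f Y"
      using iso_flip[OF iso] by blast
    note P = iso_props[OF hA hC bij mono]
    have fA: "f ` A = C" by (rule P(2))
    have fInt: "\<And>B. B \<subseteq> A \<Longrightarrow> f (\<Inter>B) = \<Inter>(f ` B)" by (rule P(3))
    have injA: "\<And>X Y. X \<in> lat A \<Longrightarrow> Y \<in> lat A \<Longrightarrow> f X = f Y \<Longrightarrow> X = Y"
      using bij by (meson bij_betw_def inj_onD)
    have mD: "\<And>X Y. X \<in> lat A \<Longrightarrow> Y \<in> lat A \<Longrightarrow> X \<subseteq> Y \<Longrightarrow> f X \<subseteq> f Y"
      using mono by blast
    have fC: "f H \<in> C" if "H \<in> A" for H using fA that by blast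
    have "\<forall>k. \<exists>b. b \<noteq> 0 \<and> f (hypI {k}) = {x. dot b x = 0}"
      using fC[OF single] hC qh_iff by blast
    then obtain a where a: "\<And>k. a k \<noteq> 0" "\<And>k. f (hypI {k}) = {x. dot (a k) x = 0}"
      by metis
    obtain a0 where a0: "a0 \<noteq> 0" "f (hypI UNIV) = {x. dot a0 x = 0}"
      using fC[OF univA] hC qh_iff by blast
    have Kset: "\<Inter>(f ` {hypI {k} |k. P k}) = {x. \<forall>k. P k \<longrightarrow> dot (a k) x = 0}" for P
    proof (rule set_eqI)
      fix x
      have "x \<in> \<Inter>(f ` {hypI {k} |k. P k}) \<longleftrightarrow> (\<forall>k. P k \<longrightarrow> x \<in> f (hypI {k}))" by blast
      then show "x \<in> \<Inter>(f ` {hypI {k} |k. P k}) \<longleftrightarrow> x \<in> {x. \<forall>k. P k \<longrightarrow> dot (a k) x = 0}"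
        by (simp add: a(2))
    qed
    have Kset2: "\<Inter>(f ` ({hypI {k} |k. P k} \<union> {hypI UNIV})) =
        {x. (\<forall>k. P k \<longrightarrow> dot (a k) x = 0) \<and> dot a0 x = 0}" for P
      using Kset[of P] a0(2) by auto
    have latB: "\<Inter>B \<in> lat A" if "B \<subseteq> A" for B using that unfolding lat_def by blast
    have sA1: "{hypI {k} |k. P k} \<subseteq> A" for P using single by blast
    have sA2: "{hypI {k} |k. P k} \<union> {hypI UNIV} \<subseteq> A" for P using single univA by blast
    have ee1: "ee m \<in> \<Inter>{hypI {k} |k. k \<noteq> m}" "ee m \<notin> \<Inter>{hypI {k} |k. True}" for m
    proof -
      show "ee m \<in> \<Inter>{hypI {k} |k. k \<noteq> m}" by (auto simp: hypI_single ee_def)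
      show "ee m \<notin> \<Inter>{hypI {k} |k. True}"
      proof
        assume "ee m \<in> \<Inter>{hypI {k} |k. True}"
        then have "ee m \<in> hypI {m}" by blast
        then show False by (simp add: hypI_single ee_def)
      qed
    qed
    have ex1: "\<exists>x. (\<forall>k. k \<noteq> m \<longrightarrow> dot (a k) x = 0) \<and> dot (a m) x \<noteq> 0" for m
    proof (rule ccontr)
      assume "\<not> ?thesis"
      then have "{x. \<forall>k. k \<noteq> m \<longrightarrow> dot (a k) x = 0} = {x. \<forall>k. True \<longrightarrow> dot (a k) x = 0}"
        by auto
      moreover have "f (\<Inter>{hypI {k} |k. k \<noteq> m}) = {x. \<forall>k. k \<noteq> m \<longrightarrow> dot (a k) x = 0}"
        using fInt[OF sA1, of "\<lambda>k. k \<noteq> m"] Kset[of "\<lambda>k. k \<noteq> m"] by simp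
      moreover have "f (\<Inter>{hypI {k} |k. True}) = {x. \<forall>k. True \<longrightarrow> dot (a k) x = 0}"
        using fInt[OF sA1, of "\<lambda>k. True"] Kset[of "\<lambda>k. True"] by simp
      ultimately have "f (\<Inter>{hypI {k} |k. k \<noteq> m}) = f (\<Inter>{hypI {k} |k. True})"
        by simp
      then have "\<Inter>{hypI {k} |k. k \<noteq> m} = \<Inter>{hypI {k} |k. True}"
        by (rule injA[OF latB[OF sA1] latB[OF sA1]])
      then show False using ee1[of m] by blast
    qed
    have ex2: "\<exists>x. (\<forall>k. k \<noteq> m \<longrightarrow> dot (a k) x = 0) \<and> dot a0 x \<noteq> 0" for m
    proof (rule ccontr)
      assume "\<not> ?thesis"
      then have "{x. (\<forall>k. k \<noteq> m \<longrightarrow> dot (a k) x = 0) \<and> dot a0 x = 0} = {x. \<forall>k. k \<noteq> m \<longrightarrow> dot (a k) x = 0}"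
        by auto
      moreover have "f (\<Inter>{hypI {k} |k. k \<noteq> m}) = {x. \<forall>k. k \<noteq> m \<longrightarrow> dot (a k) x = 0}"
        using fInt[OF sA1, of "\<lambda>k. k \<noteq> m"] Kset[of "\<lambda>k. k \<noteq> m"] by simp
      moreover have "f (\<Inter>({hypI {k} |k. k \<noteq> m} \<union> {hypI UNIV})) = {x. (\<forall>k. k \<noteq> m \<longrightarrow> dot (a k) x = 0) \<and> dot a0 x = 0}"
        using fInt[OF sA2, of "\<lambda>k. k \<noteq> m"] Kset2[of "\<lambda>k. k \<noteq> m"] by simp
      ultimately have "f (\<Inter>({hypI {k} |k. k \<noteq> m} \<union> {hypI UNIV})) = f (\<Inter>{hypI {k} |k. k \<noteq> m})"
        by simp
      then have "\<Inter>({hypI {k} |k. k \<noteq> m} \<union> {hypI UNIV}) = \<Inter>{hypI {k} |k. k \<noteq> m}"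
        by (rule injA[OF latB[OF sA2] latB[OF sA1]])
      moreover have "ee m \<notin> hypI UNIV" by (simp add: hypI_def dot_ee[of "\<lambda>_. 1", unfolded dot_def, simplified])
      ultimately show False using ee1(1)[of m] by blast
    qed
    have "\<forall>m. \<exists>x. (\<forall>k. k \<noteq> m \<longrightarrow> dot (a k) x = 0) \<and> dot (a m) x \<noteq> 0" using ex1 by blast
    then have "\<exists>xm. \<forall>m. (\<forall>k. k \<noteq> m \<longrightarrow> dot (a k) (xm m) = 0) \<and> dot (a m) (xm m) \<noteq> 0"
      by (rule choice)
    then obtain xm where xm: "\<And>m. (\<forall>k. k \<noteq> m \<longrightarrow> dot (a k) (xm m) = 0) \<and> dot (a m) (xm m) \<noteq> 0"
      by blast
    define y where "y m = sc (1 / dot (a m) (xm m)) (xm m)" for m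
    have ay: "dot (a k) (y m) = (if k = m then 1 else 0)" for k m
      using xm[of m] by (auto simp: y_def dot_sc)
    define psi where "psi z = (\<lambda>k. dot (a k) z)" for z
    have psi_add: "psi (x + z) = psi x + psi z" for x z by (simp add: psi_def fun_eq_iff dot_add)
    have psi_sc: "psi (sc c x) = sc c (psi x)" for c x by (simp add: psi_def dot_sc) (simp add: sc_def)
    have psi_comb: "psi (\<Sum>m\<in>UNIV. sc (t m) (y m)) = t" for t
      by (simp add: psi_def fun_eq_iff dot_sum dot_sc ay delta_sum)
    have "surj psi" by (rule surjI[of _ "\<lambda>t. \<Sum>m\<in>UNIV. sc (t m) (y m)"]) (rule psi_comb)
    then have psi_inj: "inj psi" by (rule surj_imp_inj[OF psi_add psi_sc])
    define w where "w m = dot a0 (y m)" for m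
    have wne: "w m \<noteq> 0" for m
    proof -
      obtain z where z: "\<forall>k. k \<noteq> m \<longrightarrow> dot (a k) z = 0" "dot a0 z \<noteq> 0" using ex2 by blast
      have "psi z = psi (sc (dot (a m) z) (y m))"
        using z(1) by (auto simp: psi_def fun_eq_iff dot_sc ay)
      then have "z = sc (dot (a m) z) (y m)" using psi_inj by (simp add: inj_eq)
      then have "dot a0 z = dot a0 (sc (dot (a m) z) (y m))" by simp
      then have "dot a0 z = dot (a m) z * w m" by (simp add: dot_sc w_def)
      then show ?thesis using z(2) by auto
    qed
    define phi where "phi t = (\<Sum>m\<in>UNIV. sc (t m / w m) (y m))" for t
    have phi_apply: "phi t i = (\<Sum>m\<in>UNIV. t m / w m * y m i)" for t i
      by (simp add: phi_def sum_fun_apply sc_def)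
    have aphi: "dot (a k) (phi t) = t k / w k" for k t
    proof -
      have "dot (a k) (phi t) = (\<Sum>m\<in>UNIV. (t m / w m) * (if k = m then 1 else 0))"
        unfolding phi_def dot_sum dot_sc ay by (rule refl)
      then show ?thesis by (simp only: delta_sum)
    qed
    have a0phi: "dot a0 (phi t) = (\<Sum>m\<in>UNIV. t m)" for t
      using wne by (simp add: phi_def dot_sum dot_sc w_def[symmetric])
    have phi_add: "phi (x + z) = phi x + phi z" for x z
      by (simp add: fun_eq_iff phi_apply add_divide_distrib distrib_right sum.distrib)
    have phi_sc: "phi (sc c x) = sc c (phi x)" for c x
      by (simp add: fun_eq_iff phi_apply sc_def sum_distrib_left mult.assoc)
    have phi0: "phi 0 = 0" using phi_sc[of 0 0] by (simp add: sc_def zero_fun_def)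
    have ql: "qlinear phi"
      unfolding qlinear_def
    proof (intro conjI allI)
      fix x z :: "'n \<Rightarrow> rat"
      show "phi (\<lambda>i. x i + z i) = (\<lambda>i. phi x i + phi z i)"
        using phi_add[of x z] by (simp add: plus_fun_def)
    next
      fix c and x :: "'n \<Rightarrow> rat"
      show "phi (\<lambda>i. c * x i) = (\<lambda>i. c * phi x i)"
        using phi_sc[of c x] by (simp add: sc_def)
    qed
    have bphi: "bij phi"
    proof (rule bijI)
      show "inj phi"
      proof (rule injI)
        fix s t assume "phi s = phi t"
        then have "s k / w k = t k / w k" for k using aphi by metis
        then show "s = t" using wne by (simp add: fun_eq_iff)
      qed
      show "surj phi"
      proof (rule surjI)
        fix z
        have "psi (phi (\<lambda>k. w k * dot (a k) z)) = psi z"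
          using wne by (simp add: psi_def aphi)
        then show "phi (\<lambda>k. w k * dot (a k) z) = z" using psi_inj by (simp add: inj_eq)
      qed
    qed
    have phi_comb: "finite F \<Longrightarrow> phi (\<Sum>v\<in>F. sc (c v) v) = (\<Sum>v\<in>F. sc (c v) (phi v))" for F c
    proof (induction F rule: finite_induct)
      case empty then show ?case by (simp only: sum.empty phi0)
    next
      case (insert v F) then show ?case by (simp only: sum.insert[OF insert.hyps] phi_add phi_sc insert.IH)
    qed
    have pre_sub: "vs.subspace {t. phi t \<in> V}" if "vs.subspace V" for V
      using that by (simp add: vs.subspace_def phi_add phi_sc phi0)
    have base1: "phi ` hypI {k} = f (hypI {k})" for k
    proof (rule imgI[OF bphi])
      fix t
      have "phi t \<in> f (hypI {k}) \<longleftrightarrow> t k / w k = 0" by (simp only: a(2) mem_Collect_eq aphi)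
      also have "\<dots> \<longleftrightarrow> t \<in> hypI {k}" using wne[of k] by (simp add: hypI_single)
      finally show "phi t \<in> f (hypI {k}) \<longleftrightarrow> t \<in> hypI {k}" .
    qed
    have base2: "phi ` hypI UNIV = f (hypI UNIV)"
    proof (rule imgI[OF bphi])
      fix t
      have "phi t \<in> f (hypI UNIV) \<longleftrightarrow> (\<Sum>m\<in>UNIV. t m) = 0" by (simp only: a0(2) mem_Collect_eq a0phi)
      then show "phi t \<in> f (hypI UNIV) \<longleftrightarrow> t \<in> hypI UNIV" by (simp add: hypI_def)
    qed
    have main: "\<forall>H\<in>Gen A S i. phi ` H = f H" for i
    proof (induction i)
      case 0
      then show ?case using base1 base2 by (auto simp: S_def)
    next
      case (Suc i)
      show ?case
      proof
        fix H assume "H \<in> Gen A S (Suc i)"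
        then have HA: "H \<in> A" and "\<exists>J \<subseteq> lat (Gen A S i). H = subspace_sum J" by auto
        then obtain J where J: "J \<subseteq> lat (Gen A S i)" "H = qspan (\<Union>J)"
          unfolding subspace_sum_def by blast
        have qH: "qhyperplane H" using hA HA by blast
        have fHC: "f H \<in> C" by (rule fC[OF HA])
        have qfH: "qhyperplane (f H)" using hC fHC by blast
        have HlA: "H \<in> lat A" using HA by (rule in_lat)
        have X: "phi ` X \<subseteq> f H" if XJ: "X \<in> J" for X
        proof -
          obtain B where B: "B \<subseteq> Gen A S i" "X = \<Inter>B" using J(1) XJ unfolding lat_def by blast
          have BA: "B \<subseteq> A" using B(1) GenA by blast
          have IHB: "(\<lambda>H. phi ` H) ` B = f ` B"
            by (rule image_cong[OF refl]) (use Suc.IH B(1) in blast)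
          have "phi ` X = \<Inter>((\<lambda>H. phi ` H) ` B)" using B(2) bij_image_Inter[OF bphi] by simp
          also have "\<dots> = \<Inter>(f ` B)" using IHB by simp
          also have "\<dots> = f X" using fInt[OF BA] B(2) by simp
          finally have e: "phi ` X = f X" .
          have "X \<subseteq> H" using XJ J(2) sub_qspan by blast
          moreover have "X \<in> lat A" using B BA latB by simp
          ultimately have "f X \<subseteq> f H" using mD HlA by blast
          then show ?thesis using e by simp
        qed
        have subfH: "vs.subspace (f H)" by (rule qh_subspace[OF qfH])
        have "H \<subseteq> {t. phi t \<in> f H}"
        proof
          fix x assume "x \<in> H"
          then obtain F c where F: "finite F" "F \<subseteq> \<Union>J" "x = (\<Sum>v\<in>F. sc (c v) v)"
            using J(2) qspan_comb by blast
          have "phi v \<in> f H" if "v \<in> F" for v using X F(2) that by blast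
          then have "(\<Sum>v\<in>F. sc (c v) (phi v)) \<in> f H"
            by (intro vs.subspace_sum[OF subfH] vs.subspace_scale[OF subfH])
          then show "x \<in> {t. phi t \<in> f H}" using F phi_comb by simp
        qed
        then have "{t. phi t \<in> f H} = H \<or> {t. phi t \<in> f H} = UNIV"
          using qh_max[OF qH] pre_sub[OF subfH] by blast
        moreover have "{t. phi t \<in> f H} \<noteq> UNIV"
        proof
          assume "{t. phi t \<in> f H} = UNIV"
          have "z \<in> f H" for z
          proof -
            obtain t where "z = phi t" using bphi by (metis bij_def surj_def)
            then show ?thesis using \<open>{t. phi t \<in> f H} = UNIV\<close> by blast
          qed
          then have "f H = UNIV" by blast
          then show False using qh_ne[OF qfH] by simp
        qed
        ultimately have "{t. phi t \<in> f H} = H" by blast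
        then show "phi ` H = f H" by (intro imgI[OF bphi]) blast
      qed
    qed
    have "(\<lambda>H. phi ` H) ` A = f ` A"
    proof (rule image_cong[OF refl])
      fix H assume "H \<in> A"
      then have "H \<in> generated A S" using gen by simp
      then obtain i where "H \<in> Gen A S i" unfolding generated_def by blast
      then show "phi ` H = f H" using main by blast
    qed
    then have "C = (\<lambda>H. phi ` H) ` A" using fA by simp
    then show "\<exists>\<phi>. qlinear \<phi> \<and> bij \<phi> \<and> C = (\<lambda>H. \<phi> ` H) ` A" using ql bphi by blast
  qed
  show ?thesis using gen pu unfolding A_def by simp
qed


end
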